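(* Let $G$ be an abelian group, $\underline{g}=(g_1,\dots,g_m)\in G^m$, and $\tilde{\underline{g}}=(g_1,\dots,g_m,g_m)\in G^{m+1}$. Let $S=\mathcal{B}(\underline{g})$ with the grading $S_d=\{\alpha\in\mathcal{B}(\underline{g})\mid\alpha_m=d\}$. Then $\mathcal{B}(\tilde{\underline{g}})\cong\tilde S$ as monoids.
   Context: $G$ is written multiplicatively. For $\underline{h}=(h_1,\dots,h_k)\in G^k$, $\mathcal{B}(\underline{h})=\{\alpha\in\mathbb{N}_0^k\mid\prod_i h_i^{\alpha_i}=1\}$, a submonoid of the additive monoid $\mathbb{N}_0^k$. For a graded monoid $S=\bigsqcup_d S_d$ (with $S_dS_e\subseteq S_{d+e}$, $|s|=d$ for $s\in S_d$), $\tilde S=\{s[i]\mid s\in S,\ 0\le i\le|s|\}$ with operation $s[i]\cdot t[j]=(s\cdot t)[i+j]$. *)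

theory Defs
  imports "HOL-Algebra.Algebra"
begin

text \<open>Elements of N_0^k are represented as functions nat => nat vanishing from index k on.
  B(h) = { alpha in N_0^k | prod_i h_i^alpha_i = 1 } for h = (h_0,...,h_{k-1}).\<close>

definition Bmon :: "('a, 'b) monoid_scheme \<Rightarrow> nat \<Rightarrow> (nat \<Rightarrow> 'a) \<Rightarrow> (nat \<Rightarrow> nat) set" where
  "Bmon G k h = {\<alpha>. (\<forall>i\<ge>k. \<alpha> i = 0) \<and>
      finprod G (\<lambda>i. h i [^]\<^bsub>G\<^esub> \<alpha> i) {..<k} = \<one>\<^bsub>G\<^esub>}"

text \<open>The tilde construction of a graded monoid (S, op) with degree function dg:
  elements s[i] are encoded as pairs (s, i) with 0 <= i <= dg s.\<close>

definition tilde_set :: "'s set \<Rightarrow> ('s \<Rightarrow> nat) \<Rightarrow> ('s \<times> nat) set" where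
  "tilde_set S dg = {(s, i). s \<in> S \<and> i \<le> dg s}"

definition tilde_op :: "('s \<Rightarrow> 's \<Rightarrow> 's) \<Rightarrow> 's \<times> nat \<Rightarrow> 's \<times> nat \<Rightarrow> 's \<times> nat" where
  "tilde_op op x y = (op (fst x) (fst y), snd x + snd y)"

definition monoid_iso ::
  "'x set \<Rightarrow> ('x \<Rightarrow> 'x \<Rightarrow> 'x) \<Rightarrow> 'x \<Rightarrow> 'y set \<Rightarrow> ('y \<Rightarrow> 'y \<Rightarrow> 'y) \<Rightarrow> 'y \<Rightarrow> ('x \<Rightarrow> 'y) \<Rightarrow> bool" where
  "monoid_iso A opA eA B opB eB f \<longleftrightarrow>
     bij_betw f A B \<and> f eA = eB \<and> (\<forall>x\<in>A. \<forall>y\<in>A. f (opA x y) = opB (f x) (f y))"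

definition vadd :: "(nat \<Rightarrow> nat) \<Rightarrow> (nat \<Rightarrow> nat) \<Rightarrow> nat \<Rightarrow> nat" where
  "vadd \<alpha> \<beta> = (\<lambda>i. \<alpha> i + \<beta> i)"

definition vzero :: "nat \<Rightarrow> nat" where "vzero = (\<lambda>i. 0)"

text \<open>g~ = (g_0,...,g_{m-1},g_{m-1}), (0-indexed) a tuple of length m+1.\<close>

definition gtilde :: "nat \<Rightarrow> (nat \<Rightarrow> 'a) \<Rightarrow> nat \<Rightarrow> 'a" where
  "gtilde m g = (\<lambda>i. if i < m then g i else g (m - 1))"

end

theory Submission
  imports Defs
begin

lemma key_prod:
  fixes G (structure) and n :: nat and \<beta> :: "nat \<Rightarrow> nat" and g :: "nat \<Rightarrow> 'a"
  assumes cg: "comm_group G" and gc: "\<forall>i<Suc n. g i \<in> carrier G"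
  shows "finprod G (\<lambda>i. gtilde (Suc n) g i [^]\<^bsub>G\<^esub> \<beta> i) {..<Suc n + 1}
       = finprod G (\<lambda>i. g i [^]\<^bsub>G\<^esub> (\<beta>(n := \<beta> n + \<beta> (Suc n), Suc n := 0)) i) {..<Suc n}"
proof -
  interpret comm_group G by (rule cg)
  let ?h = "\<lambda>i. gtilde (Suc n) g i [^] \<beta> i"
  let ?k = "\<lambda>i. g i [^] (\<beta>(n := \<beta> n + \<beta> (Suc n), Suc n := 0)) i"
  have gt: "gtilde (Suc n) g i \<in> carrier G" for i using gc by (simp add: gtilde_def)
  have hc: "?h \<in> A \<rightarrow> carrier G" for A using gt by (auto intro: nat_pow_closed)
  have kc: "?k \<in> {..<Suc n} \<rightarrow> carrier G" using gc by auto
  have s1: "{..<Suc n + 1} = insert (Suc n) (insert n {..<n})" by auto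
  have s2: "{..<Suc n} = insert n {..<n}" by auto
  have L: "finprod G ?h {..<Suc n + 1} = ?h (Suc n) \<otimes> (?h n \<otimes> finprod G ?h {..<n})"
    unfolding s1 using gt by (simp add: Pi_def)
  have eq: "finprod G ?k {..<n} = finprod G ?h {..<n}"
    by (rule finprod_cong') (use gt in \<open>auto simp: gtilde_def\<close>)
  have R: "finprod G ?k {..<Suc n} = ?k n \<otimes> finprod G ?k {..<n}"
    unfolding s2 using kc gc by (intro finprod_insert) auto
  have gn: "g n \<in> carrier G" using gc by auto
  have hn: "?h n = g n [^] \<beta> n" "?h (Suc n) = g n [^] \<beta> (Suc n)" by (auto simp: gtilde_def)
  have kn: "?k n = g n [^] \<beta> n \<otimes> g n [^] \<beta> (Suc n)"
    using gn by (simp add: nat_pow_mult)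
  have P: "finprod G ?h {..<n} \<in> carrier G" using hc by auto
  show ?thesis unfolding L R kn eq hn using gn P
    by (simp add: m_ac)
qed

theorem proposition4p6:
  fixes G :: "('a, 'b) monoid_scheme" and m :: nat and g :: "nat \<Rightarrow> 'a"
  assumes "comm_group G"
    and "m \<ge> 1"
    and "\<forall>i<m. g i \<in> carrier G"
  shows "\<exists>f. monoid_iso (Bmon G (m + 1) (gtilde m g)) vadd vzero
                (tilde_set (Bmon G m g) (\<lambda>\<alpha>. \<alpha> (m - 1)))
                (tilde_op vadd) (vzero, 0) f"
proof -
  obtain n where mn: "m = Suc n" using assms(2) by (cases m) auto
  have gc: "\<forall>i<Suc n. g i \<in> carrier G" using assms(3) mn by simp
  define f where "f = (\<lambda>\<beta>::nat\<Rightarrow>nat. (\<beta>(n := \<beta> n + \<beta> (Suc n), Suc n := 0), \<beta> (Suc n)))"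
  have K: "\<And>\<beta>. finprod G (\<lambda>i. gtilde (Suc n) g i [^]\<^bsub>G\<^esub> \<beta> i) {..<Suc n + 1}
       = finprod G (\<lambda>i. g i [^]\<^bsub>G\<^esub> (fst (f \<beta>)) i) {..<Suc n}"
    unfolding f_def fst_conv by (rule key_prod[OF assms(1) gc])
  let ?B1 = "Bmon G (Suc n + 1) (gtilde (Suc n) g)"
  let ?B0 = "Bmon G (Suc n) g"
  let ?T = "tilde_set ?B0 (\<lambda>\<alpha>. \<alpha> n)"
  have into: "f \<beta> \<in> ?T" if b: "\<beta> \<in> ?B1" for \<beta>
  proof -
    have "fst (f \<beta>) \<in> ?B0"
      using b K[of \<beta>] unfolding Bmon_def f_def by auto
    then show ?thesis unfolding tilde_set_def f_def by auto
  qed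
  have inj: "inj_on f ?B1"
  proof
    fix \<beta> \<gamma> assume b: "\<beta> \<in> ?B1" and c: "\<gamma> \<in> ?B1" and e: "f \<beta> = f \<gamma>"
    have z: "\<forall>i\<ge>Suc n + 1. \<beta> i = 0" "\<forall>i\<ge>Suc n + 1. \<gamma> i = 0"
      using b c unfolding Bmon_def by auto
    have e1: "\<beta> (Suc n) = \<gamma> (Suc n)" using e unfolding f_def by (metis snd_conv)
    have e2: "\<beta>(n := \<beta> n + \<beta> (Suc n), Suc n := 0) = \<gamma>(n := \<gamma> n + \<gamma> (Suc n), Suc n := 0)"
      using e unfolding f_def by (metis fst_conv)
    show "\<beta> = \<gamma>"
    proof
      fix i
      have "(\<beta>(n := \<beta> n + \<beta> (Suc n), Suc n := 0)) i = (\<gamma>(n := \<gamma> n + \<gamma> (Suc n), Suc n := 0)) i"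
        using e2 by simp
      then show "\<beta> i = \<gamma> i" using e1 z
        by (cases "i = n"; cases "i = Suc n") (auto split: if_splits)
    qed
  qed
  have onto: "?T \<subseteq> f ` ?B1"
  proof
    fix x assume x: "x \<in> ?T"
    obtain \<alpha> i where xa: "x = (\<alpha>, i)" and a: "\<alpha> \<in> ?B0" and il: "i \<le> \<alpha> n"
      using x unfolding tilde_set_def by auto
    define \<beta> where "\<beta> = \<alpha>(n := \<alpha> n - i, Suc n := i)"
    have az: "\<forall>j\<ge>Suc n. \<alpha> j = 0" using a unfolding Bmon_def by auto
    have fb: "f \<beta> = x"
    proof -
      have "\<beta>(n := \<beta> n + \<beta> (Suc n), Suc n := 0) = \<alpha>"
      proof
        fix j show "(\<beta>(n := \<beta> n + \<beta> (Suc n), Suc n := 0)) j = \<alpha> j"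
          using il az unfolding \<beta>_def by auto
      qed
      then show ?thesis unfolding f_def xa \<beta>_def by simp
    qed
    have "\<beta> \<in> ?B1"
      using a K[of \<beta>] fb az unfolding Bmon_def xa \<beta>_def by auto
    then show "x \<in> f ` ?B1" using fb by blast
  qed
  have bij: "bij_betw f ?B1 ?T"
    unfolding bij_betw_def using inj into onto by blast
  have z: "f vzero = (vzero, 0)"
    unfolding f_def vzero_def by (auto simp: fun_eq_iff)
  have h: "f (vadd x y) = tilde_op vadd (f x) (f y)" for x y
    unfolding f_def vadd_def tilde_op_def by (auto simp: fun_eq_iff)
  show ?thesis unfolding mn monoid_iso_def using bij z h by auto
qed

end
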